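(* Let $(a_n)_{n\ge0}$ be a sequence of positive real numbers, and set $u_n=\frac{a_{2n-1}}{a_{2n}}$ and $v_n=\frac{2na_{2n}}{(2n+1)a_{2n+1}}$ for $n\ge1$. Suppose (i) $(u_n)$ and $(v_n)$ are decreasing in $n$; (ii) $\sum_{i=1}^n a_{2i-1}u_n^{2i-1}<a_0$ for all $n\ge1$; (iii) $\sum_{i=1}^n 2ia_{2i}v_n^{2i-1}<a_1$ for all $n\ge1$. Then for every $m\ge0$ the polynomial $\sum_{i=0}^m a_ix^i$ has no real root if $m$ is even and exactly one real root (counted with multiplicity) if $m$ is odd. *)

theory Defs
  imports "HOL-Computational_Algebra.Polynomial"
begin

definition partial_poly :: "(nat \<Rightarrow> real) \<Rightarrow> nat \<Rightarrow> real poly" where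
  "partial_poly a m = (\<Sum>i\<le>m. monom (a i) i)"

definition num_real_roots :: "real poly \<Rightarrow> nat" where
  "num_real_roots p = (\<Sum>x\<in>{x. poly p x = 0}. order x p)"

end

theory Submission
  imports Defs
begin


lemma coeff_partial: "coeff (partial_poly a m) k = (if k \<le> m then a k else 0)"
  unfolding partial_poly_def by (simp add: coeff_sum)

lemma poly_partial: "poly (partial_poly a m) x = (\<Sum>i\<le>m. a i * x^i)"
  unfolding partial_poly_def by (simp add: poly_sum poly_monom)

lemma degree_partial: "a m \<noteq> 0 \<Longrightarrow> degree (partial_poly a m) = m"
  by (rule antisym) (auto intro!: degree_le le_degree simp: coeff_partial)

lemma pderiv_partial: "pderiv (partial_poly a (Suc m)) = partial_poly (\<lambda>i. real (Suc i) * a (Suc i)) m"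
  by (rule poly_eqI) (simp add: coeff_pderiv coeff_partial)

lemma group_sum: "(\<Sum>i\<le>2*n. a i * (x::real)^i) = a 0 + (\<Sum>i=1..n. a(2*i-1) * x^(2*i-1) + a(2*i) * x^(2*i))"
proof (induction n)
  case 0 then show ?case by simp
next
  case (Suc n)
  have e: "2 * Suc n = Suc (Suc (2*n))" by simp
  show ?case unfolding e using Suc by (simp add: sum.atMost_Suc algebra_simps)
qed

lemma key:
  fixes a :: "nat \<Rightarrow> real"
  assumes pos: "\<And>n. a n > 0"
  and c2: "\<And>n. n \<ge> 1 \<Longrightarrow> (\<Sum>i=1..n. a(2*i-1) * (a(2*n-1)/a(2*n))^(2*i-1)) < a 0"
  shows "(\<Sum>i\<le>2*n. a i * x^i) > 0"
proof -
  define T where "T i = a(2*i-1) * x^(2*i-1) + a(2*i) * x^(2*i)" for i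
  have g: "(\<Sum>i\<le>2*n. a i * x^i) = a 0 + (\<Sum>i=1..n. T i)"
    unfolding T_def by (rule group_sum)
  have ev: "x^(2*i) \<ge> 0" for i by (simp add: zero_le_even_power)
  have Tlow: "T i \<ge> a(2*i-1) * x^(2*i-1)" for i
    unfolding T_def using ev[of i] pos[of "2*i"] by simp
  show ?thesis
  proof (cases "x \<ge> 0")
    case True
    have "T i \<ge> 0" for i unfolding T_def using True pos[of "2*i-1"] pos[of "2*i"] by simp
    then have "(\<Sum>i=1..n. T i) \<ge> 0" by (simp add: sum_nonneg)
    then show ?thesis using g pos[of 0] by linarith
  next
    case False
    define t where "t = -x"
    have t0: "t > 0" using False t_def by simp
    have xp: "x^(2*i-1) = - (t^(2*i-1))" if "i \<ge> 1" for i
      unfolding t_def using that by (simp add: power_minus_odd)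
    have Tnonneg: "T i \<ge> 0" if "i \<ge> 1" "\<not> t < a(2*i-1)/a(2*i)" for i
    proof -
      have "a(2*i-1) \<le> t * a(2*i)" using that pos[of "2*i"] by (simp add: field_simps)
      then have h: "a(2*i-1) - t * a(2*i) \<le> 0" by simp
      have "x^(2*i) = t^(2*i-1) * t"
      proof -
        have "x^(2*i) = t^(2*i)" unfolding t_def by simp
        also have "2*i = Suc (2*i-1)" using that by simp
        then have "t^(2*i) = t^(2*i-1) * t" by (metis power_Suc2)
        finally show ?thesis .
      qed
      then have "T i = t^(2*i-1) * (t * a(2*i) - a(2*i-1))"
        unfolding T_def using xp[OF that(1)] by (simp add: algebra_simps)
      moreover have "t^(2*i-1) \<ge> 0" using t0 by simp
      ultimately show ?thesis using h by simp
    qed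
    define S where "S = {i\<in>{1..n}. t < a(2*i-1)/a(2*i)}"
    show ?thesis
    proof (cases "S = {}")
      case True
      have "(\<Sum>i=1..n. T i) \<ge> 0" using True Tnonneg unfolding S_def by (intro sum_nonneg) auto
      then show ?thesis using g pos[of 0] by linarith
    next
      case False
      define k where "k = Max S"
      have fS: "finite S" unfolding S_def by simp
      have kS: "k \<in> S" using False fS k_def by simp
      then have k1: "1 \<le> k" "k \<le> n" and tk: "t < a(2*k-1)/a(2*k)" unfolding S_def by auto
      have kmax: "i \<notin> S" if "k < i" for i using that fS k_def Max_ge not_le by blast
      have split: "{1..n} = {1..k} \<union> {Suc k..n}" using k1 by auto
      have "(\<Sum>i=1..n. T i) = (\<Sum>i=1..k. T i) + (\<Sum>i=Suc k..n. T i)"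
        unfolding split by (rule sum.union_disjoint) auto
      moreover have "(\<Sum>i=Suc k..n. T i) \<ge> 0"
        using kmax Tnonneg unfolding S_def by (intro sum_nonneg) force
      moreover have "(\<Sum>i=1..k. T i) \<ge> (\<Sum>i=1..k. - (a(2*i-1) * (a(2*k-1)/a(2*k))^(2*i-1)))"
      proof (rule sum_mono)
        fix i assume i: "i \<in> {1..k}"
        have "t^(2*i-1) \<le> (a(2*k-1)/a(2*k))^(2*i-1)"
          using tk t0 by (intro power_mono) auto
        then have "- (a(2*i-1) * (a(2*k-1)/a(2*k))^(2*i-1)) \<le> a(2*i-1) * x^(2*i-1)"
          using xp[of i] i pos[of "2*i-1"] by simp
        then show "- (a(2*i-1) * (a(2*k-1)/a(2*k))^(2*i-1)) \<le> T i" using Tlow[of i] by linarith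
      qed
      moreover have "(\<Sum>i=1..k. - (a(2*i-1) * (a(2*k-1)/a(2*k))^(2*i-1))) > - a 0"
        using c2[OF k1(1)] by (simp add: sum_negf)
      ultimately show ?thesis using g by linarith
    qed
  qed
qed



theorem mainTheorem13:
  fixes a :: "nat \<Rightarrow> real"
  assumes pos: "\<And>n. a n > 0"
    and u_dec: "\<And>n. n \<ge> 1 \<Longrightarrow> a (2*(n+1)-1) / a (2*(n+1)) \<le> a (2*n-1) / a (2*n)"
    and v_dec: "\<And>n. n \<ge> 1 \<Longrightarrow>
        (2*real (n+1) * a (2*(n+1))) / ((2*real (n+1)+1) * a (2*(n+1)+1))
          \<le> (2*real n * a (2*n)) / ((2*real n+1) * a (2*n+1))"
    and cond2: "\<And>n. n \<ge> 1 \<Longrightarrow>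
        (\<Sum>i=1..n. a (2*i-1) * (a (2*n-1) / a (2*n)) ^ (2*i-1)) < a 0"
    and cond3: "\<And>n. n \<ge> 1 \<Longrightarrow>
        (\<Sum>i=1..n. 2*real i * a (2*i) *
           ((2*real n * a (2*n)) / ((2*real n+1) * a (2*n+1))) ^ (2*i-1)) < a 1"
  shows "\<forall>m. (even m \<longrightarrow> num_real_roots (partial_poly a m) = 0)
            \<and> (odd m \<longrightarrow> num_real_roots (partial_poly a m) = 1)"

proof (intro allI conjI impI)
  fix m :: nat
  assume "even m"
  then obtain n where m: "m = 2*n" by auto
  have "poly (partial_poly a m) x \<noteq> 0" for x
    using key[OF pos cond2, where n=n and x=x] unfolding m poly_partial by simp
  then have "{x. poly (partial_poly a m) x = 0} = {}" by auto
  then show "num_real_roots (partial_poly a m) = 0" unfolding num_real_roots_def by simp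
next
  fix m :: nat
  assume "odd m"
  then obtain n where m: "m = Suc (2*n)" by (metis oddE Suc_eq_plus1)
  define p where "p = partial_poly a m"
  define b where "b i = real (Suc i) * a (Suc i)" for i
  have bpos: "b i > 0" for i unfolding b_def using pos by simp
  have b1: "b (2*i-1) = 2*real i * a (2*i)" if "i \<ge> 1" for i
  proof -
    have "Suc (2*i-1) = 2*i" using that by simp
    then show ?thesis unfolding b_def by simp
  qed
  have b2: "b (2*i) = (2*real i + 1) * a (2*i+1)" for i unfolding b_def by simp
  have c2b: "(\<Sum>i=1..k. b(2*i-1) * (b(2*k-1)/b(2*k))^(2*i-1)) < b 0" if k: "k \<ge> 1" for k
  proof -
    have "(\<Sum>i=1..k. b(2*i-1) * (b(2*k-1)/b(2*k))^(2*i-1)) =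
      (\<Sum>i=1..k. 2*real i * a (2*i) *
           ((2*real k * a (2*k)) / ((2*real k+1) * a (2*k+1))) ^ (2*i-1))"
      using b1 b2 k by (intro sum.cong) auto
    moreover have "b 0 = a 1" unfolding b_def by simp
    ultimately show ?thesis using cond3[OF k] by simp
  qed
  have dp: "pderiv p = partial_poly b (2*n)" unfolding p_def m b_def by (rule pderiv_partial)
  have dpos: "poly (pderiv p) x > 0" for x
    unfolding dp poly_partial using key[OF bpos c2b, where n=n and x=x] by simp
  have p0: "poly p 0 = a 0" unfolding p_def poly_partial m sum.atMost_Suc_shift by simp
  have pnz: "p \<noteq> 0" using p0 pos[of 0] by auto
  have mono: "poly p x < poly p y" if "x < y" for x y
  proof (rule DERIV_pos_imp_increasing[OF that])
    fix z :: real
    show "\<exists>y. DERIV (poly p) z :> y \<and> y > 0" using poly_DERIV[of p z] dpos[of z] by blast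
  qed
  define c where "c i = (-1)^(i+1) * a i" for i
  define q where "q = partial_poly c m"
  have qp: "poly q x = - poly p (-x)" for x
  proof -
    have "poly q x = (\<Sum>i\<le>m. - (a i * (-x)^i))"
      unfolding q_def poly_partial c_def
    proof (rule sum.cong)
      fix i assume "i \<in> {..m}"
      have "(-x)^i = (-1)^i * x^i" by (rule power_minus)
      then show "(-1)^(i+1) * a i * x^i = - (a i * (-x)^i)" by simp
    qed simp
    then show ?thesis unfolding p_def poly_partial by (simp add: sum_negf)
  qed
  have cm: "c m = a m" unfolding c_def using \<open>odd m\<close> by simp
  have dq: "degree q = m" unfolding q_def using cm pos[of m] by (intro degree_partial) simp
  have lq: "lead_coeff q = a m" using dq cm unfolding q_def by (simp add: coeff_partial)
  obtain N where N: "\<forall>x\<ge>N. poly q x \<ge> lead_coeff q"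
    using poly_pinfty_gt_lc[of q] lq pos[of m] by auto
  define x0 where "x0 = max N 1"
  have "x0 \<ge> N" unfolding x0_def by simp
  with N have "poly q x0 \<ge> lead_coeff q" by blast
  then have "poly q x0 > 0" using lq pos[of m] by simp
  then have neg: "poly p (-x0) < 0" using qp[of x0] by simp
  obtain r where r: "-x0 < r" "r < 0" "poly p r = 0"
  proof -
    have "x0 > 0" unfolding x0_def by simp
    then have "-x0 < 0" by simp
    from poly_IVT_pos[OF this neg] p0 pos[of 0] show ?thesis using that by auto
  qed
  have rs: "{x. poly p x = 0} = {r}"
  proof safe
    fix x assume "poly p x = 0"
    then show "x = r" using mono[of x r] mono[of r x] r(3) by (cases x r rule: linorder_cases) auto
  qed (use r in auto)
  have "order r p = Suc (order r (pderiv p))" using order_pderiv[OF pnz r(3)] .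
  moreover have "order r (pderiv p) = 0" using order_root[of "pderiv p" r] dpos[of r] by auto
  ultimately have "order r p = 1" by simp
  then show "num_real_roots (partial_poly a m) = 1"
    unfolding num_real_roots_def p_def[symmetric] rs by simp
qed

end
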